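(* Let $G=(K\cup I,E)$ be a split graph and $(V,\mathcal{F})$ the split graph vertex shelling antimatroid defined on $G$. Then for every $i\in I$, $$\mathcal{F}_i=\{\operatorname{fos}(i)\cup H:\ H \text{ is a filter of } (\operatorname{ufs}(i),\prec),\ H\cap K\neq\varnothing\}.$$
   Context: A split graph $G=(K\cup I,E)$ is a finite simple graph whose vertex set $V=K\cup I$ comes with a fixed partition into a clique $K$ and an independent set $I$. We write $u\sim v$ for adjacency; for $F\subseteq V$, $N(F)$ is the set of vertices of $V\setminus F$ adjacent to some vertex of $F$, and $N(v)=N(\{v\})$. A vertex is simplicial if its neighbours induce a clique. The split graph vertex shelling antimatroid of $G$ is $(V,\mathcal{F})$ where $F\subseteq V$ is feasible iff there is an ordering $f_1,\dots,f_{|F|}$ of $F$ such that each $f_j$ is simplicial in $G$ minus $\{f_1,\dots,f_{j-1}\}$ (the empty set is feasible). For $i\in I$, $\mathcal{F}_i$ is the family of feasible sets $F$ with $i\in N(F)$. Define $\operatorname{fos}(i)=\{k\in K: k\not\sim i\}\cup\{i'\in I: N(i')\not\subseteq N(i)\}$ and $\operatorname{ufs}(i)=V\setminus(\operatorname{fos}(i)\cup\{i\})=\big(\{k\in K:k\sim i\}\cup\{i'\in I: N(i')\subseteq N(i)\}\big)\setminus\{i\}$. The strict order $\prec$ on $K\cup I$ is $u\prec v$ iff $u\in K$, $v\in I$, $u\sim v$; $(\operatorname{ufs}(i),\prec)$ is its restriction to $\operatorname{ufs}(i)$. A filter of a poset is a subset $H$ such that $a\in H$ and $a\prec b$ imply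 $b\in H$. *)

theory Defs
  imports Main
begin

definition split_graph :: "'a set \<Rightarrow> 'a set \<Rightarrow> ('a \<Rightarrow> 'a \<Rightarrow> bool) \<Rightarrow> bool" where
  "split_graph K I adj \<longleftrightarrow>
     finite K \<and> finite I \<and> K \<inter> I = {} \<and>
     (\<forall>u v. adj u v \<longrightarrow> adj v u) \<and>
     (\<forall>u. \<not> adj u u) \<and>
     (\<forall>u v. adj u v \<longrightarrow> u \<in> K \<union> I \<and> v \<in> K \<union> I) \<and>
     (\<forall>u\<in>K. \<forall>v\<in>K. u \<noteq> v \<longrightarrow> adj u v) \<and>
     (\<forall>u\<in>I. \<forall>v\<in>I. \<not> adj u v)"

definition nbhd :: "'a set \<Rightarrow> 'a set \<Rightarrow> ('a \<Rightarrow> 'a \<Rightarrow> bool) \<Rightarrow> 'a set \<Rightarrow> 'a set" where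
  "nbhd K I adj F = {v \<in> (K \<union> I) - F. \<exists>u\<in>F. adj u v}"

definition simplicial_in :: "('a \<Rightarrow> 'a \<Rightarrow> bool) \<Rightarrow> 'a set \<Rightarrow> 'a \<Rightarrow> bool" where
  "simplicial_in adj W v \<longleftrightarrow> v \<in> W \<and>
     (\<forall>x\<in>W. \<forall>y\<in>W. adj v x \<and> adj v y \<and> x \<noteq> y \<longrightarrow> adj x y)"

definition feasible :: "'a set \<Rightarrow> 'a set \<Rightarrow> ('a \<Rightarrow> 'a \<Rightarrow> bool) \<Rightarrow> 'a set \<Rightarrow> bool" where
  "feasible K I adj F \<longleftrightarrow> (\<exists>xs. distinct xs \<and> set xs = F \<and>
     (\<forall>j < length xs. simplicial_in adj ((K \<union> I) - set (take j xs)) (xs ! j)))"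

definition F_of :: "'a set \<Rightarrow> 'a set \<Rightarrow> ('a \<Rightarrow> 'a \<Rightarrow> bool) \<Rightarrow> 'a \<Rightarrow> 'a set set" where
  "F_of K I adj i = {F. feasible K I adj F \<and> i \<in> nbhd K I adj F}"

definition fos :: "'a set \<Rightarrow> 'a set \<Rightarrow> ('a \<Rightarrow> 'a \<Rightarrow> bool) \<Rightarrow> 'a \<Rightarrow> 'a set" where
  "fos K I adj i = {k \<in> K. \<not> adj k i} \<union>
     {i' \<in> I. \<not> (nbhd K I adj {i'} \<subseteq> nbhd K I adj {i})}"

definition ufs :: "'a set \<Rightarrow> 'a set \<Rightarrow> ('a \<Rightarrow> 'a \<Rightarrow> bool) \<Rightarrow> 'a \<Rightarrow> 'a set" where
  "ufs K I adj i = (K \<union> I) - (fos K I adj i \<union> {i})"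

definition prec :: "'a set \<Rightarrow> 'a set \<Rightarrow> ('a \<Rightarrow> 'a \<Rightarrow> bool) \<Rightarrow> 'a \<Rightarrow> 'a \<Rightarrow> bool" where
  "prec K I adj u v \<longleftrightarrow> u \<in> K \<and> v \<in> I \<and> adj u v"

definition is_filter :: "('a \<Rightarrow> 'a \<Rightarrow> bool) \<Rightarrow> 'a set \<Rightarrow> 'a set \<Rightarrow> bool" where
  "is_filter r S H \<longleftrightarrow> H \<subseteq> S \<and> (\<forall>a\<in>H. \<forall>b\<in>S. r a b \<longrightarrow> b \<in> H)"

end

theory Submission
  imports Defs
begin

lemma sg_facts:
  assumes "split_graph K I adj"
  shows "finite K" "finite I" "K \<inter> I = {}" "\<And>u v. adj u v \<Longrightarrow> adj v u"
    "\<And>u. \<not> adj u u" "\<And>u v. adj u v \<Longrightarrow> u \<in> K \<union> I"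
    "\<And>u v. u \<in> K \<Longrightarrow> v \<in> K \<Longrightarrow> u \<noteq> v \<Longrightarrow> adj u v"
    "\<And>u v. u \<in> I \<Longrightarrow> v \<in> I \<Longrightarrow> \<not> adj u v"
  using assms unfolding split_graph_def by blast+

lemma adjI_K:
  assumes "split_graph K I adj" "x \<in> I" "adj x y" shows "y \<in> K"
proof -
  have "y \<in> K \<union> I" using sg_facts(6)[OF assms(1)] sg_facts(4)[OF assms(1)] assms(3) by blast
  moreover have "y \<notin> I" using sg_facts(8)[OF assms(1)] assms by blast
  ultimately show ?thesis by blast
qed

lemma simp_I:
  assumes "split_graph K I adj" "v \<in> I" "v \<in> W"
  shows "simplicial_in adj W v"
  unfolding simplicial_in_def using assms adjI_K[OF assms(1) assms(2)] sg_facts(7)[OF assms(1)] by blast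

lemma simp_K:
  assumes sg: "split_graph K I adj" and k: "k \<in> K" "k \<in> W"
    and h: "\<And>x. x \<in> W \<Longrightarrow> x \<in> I \<Longrightarrow> adj k x \<Longrightarrow> x = j \<and> (\<forall>k'\<in>K \<inter> W. adj k' j)"
  shows "simplicial_in adj W k"
  unfolding simplicial_in_def
proof (intro conjI ballI impI)
  show "k \<in> W" by fact
  fix x y assume xy: "x \<in> W" "y \<in> W" "adj k x \<and> adj k y \<and> x \<noteq> y"
  have "adj x k" "adj y k" using sg_facts(4)[OF sg, of k x] sg_facts(4)[OF sg, of k y] xy by auto
  then have xv: "x \<in> K \<union> I" "y \<in> K \<union> I" using sg_facts(6)[OF sg, of x k] sg_facts(6)[OF sg, of y k] by auto
  show "adj x y"
  proof (cases "x \<in> I")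
    case True
    then have xj: "x = j" and a: "\<forall>k'\<in>K \<inter> W. adj k' j" using h[of x] xy by blast+
    show ?thesis
    proof (cases "y \<in> I")
      case True
      then have "y = j" using h[of y] xy by blast
      then show ?thesis using xj xy by simp
    next
      case False
      then have "y \<in> K" using xv by auto
      then show ?thesis using a xj xy sg_facts(4)[OF sg, of y j] \<open>y \<in> K\<close> by auto
    qed
  next
    case False
    then have xK: "x \<in> K" using xv by auto
    show ?thesis
    proof (cases "y \<in> I")
      case True
      then have "y = j" "\<forall>k'\<in>K \<inter> W. adj k' j" using h[of y] xy by blast+
      then show ?thesis using xK xy by blast
    next
      case False
      then show ?thesis using xv xK xy sg_facts(7)[OF sg, of x y] by blast
    qed
  qed
qed

lemma simp_K_nec:
  assumes sg: "split_graph K I adj" and s: "simplicial_in adj W k" and k: "k \<in> K"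
    and x: "x \<in> I" "x \<in> W" "adj k x"
  shows "\<forall>y\<in>I \<inter> W. adj k y \<longrightarrow> y = x" "\<forall>k'\<in>K \<inter> W. k' \<noteq> k \<longrightarrow> adj k' x"
proof -
  show "\<forall>y\<in>I \<inter> W. adj k y \<longrightarrow> y = x"
    using s x sg_facts(8)[OF sg] unfolding simplicial_in_def by blast
  show "\<forall>k'\<in>K \<inter> W. k' \<noteq> k \<longrightarrow> adj k' x"
  proof (intro ballI impI)
    fix k' assume "k' \<in> K \<inter> W" "k' \<noteq> k"
    moreover have "k' \<noteq> x" using \<open>k' \<in> K \<inter> W\<close> x sg_facts(3)[OF sg] by auto
    ultimately have "adj x k'" using s x k sg_facts(7)[OF sg] unfolding simplicial_in_def by blast
    then show "adj k' x" using sg_facts(4)[OF sg] by blast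
  qed
qed

lemma nbhd_sub:
  assumes sg: "split_graph K I adj" and "x \<in> I" "i \<in> I"
  shows "nbhd K I adj {x} \<subseteq> nbhd K I adj {i} \<longleftrightarrow> (\<forall>k. adj x k \<longrightarrow> adj i k)"
proof -
  have "\<And>v. adj x v \<Longrightarrow> v \<in> K" using adjI_K[OF sg assms(2)] .
  moreover have "\<And>v. adj i v \<Longrightarrow> v \<in> K" using adjI_K[OF sg assms(3)] .
  ultimately show ?thesis unfolding nbhd_def using assms sg_facts(3)[OF sg] by blast
qed

lemma fos_iff:
  assumes sg: "split_graph K I adj" and i: "i \<in> I"
  shows "x \<in> fos K I adj i \<longleftrightarrow> (x \<in> K \<and> \<not> adj x i) \<or> (x \<in> I \<and> (\<exists>k. adj x k \<and> \<not> adj i k))"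
  unfolding fos_def using nbhd_sub[OF sg _ i] by auto

lemma nth_3:
  assumes "j < length (a @ b @ c)"
  shows "((a@b@c) ! j \<in> set a) \<or> ((a@b@c) ! j \<in> set b \<and> set a \<subseteq> set (take j (a@b@c)))
     \<or> ((a@b@c) ! j \<in> set c \<and> set a \<union> set b \<subseteq> set (take j (a@b@c)))"
proof (cases "j < length a")
  case True then show ?thesis by (simp add: nth_append)
next
  case F1: False
  show ?thesis
  proof (cases "j < length a + length b")
    case True
    have "(a@b@c) ! j = (b@c) ! (j - length a)" using F1 by (simp add: nth_append)
    also have "\<dots> = b ! (j - length a)" using F1 True by (intro nth_append_left) arith
    finally have "(a@b@c) ! j = b ! (j - length a)" .
    moreover have "set a \<subseteq> set (take j (a@b@c))" using F1 by (simp add: take_append)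
    ultimately show ?thesis using True F1 by auto
  next
    case False
    have "(a@b@c) ! j = (b@c) ! (j - length a)" using F1 by (simp add: nth_append)
    also have "\<dots> = c ! (j - length a - length b)" using F1 False by (subst nth_append_right) auto
    finally have "(a@b@c) ! j = c ! (j - length a - length b)" .
    moreover have "j - length a - length b < length c" using False assms by auto
    moreover have "set a \<union> set b \<subseteq> set (take j (a@b@c))" using F1 False
      by (auto simp: take_append)
    ultimately show ?thesis by auto
  qed
qed

lemma take_sub: "set (take j xs) \<subseteq> set xs"
  by (simp add: set_take_subset)

lemma nth_not_take: "distinct xs \<Longrightarrow> j < length xs \<Longrightarrow> xs ! j \<notin> set (take j xs)"
  by (smt (verit, ccfv_SIG) distinct_Ex1 distinct_conv_nth linorder_not_less
    nat_less_le nth_take nth_take_lemma order.trans take_all_iff)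

lemma nth_not_take2: "distinct xs \<Longrightarrow> p < j \<Longrightarrow> j < length xs \<Longrightarrow> xs ! j \<notin> set (take p xs)"
  using nth_not_take[of xs j] set_take_subset_set_take[of p j xs] by auto

lemma take_idx: "distinct xs \<Longrightarrow> xs ! p \<in> set (take j xs) \<Longrightarrow> p < length xs \<Longrightarrow> p < j"
  using nth_not_take2[of xs j p] by (metis linorder_not_less nat_less_le take_all_iff nth_not_take)

theorem mainTheorem9:
  fixes K I :: "'a set" and adj :: "'a \<Rightarrow> 'a \<Rightarrow> bool" and i :: 'a
  assumes "split_graph K I adj" and "i \<in> I"
  shows "F_of K I adj i =
    {fos K I adj i \<union> H | H. is_filter (prec K I adj) (ufs K I adj i) H \<and> H \<inter> K \<noteq> {}}"
proof -
  note sg = assms(1)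
  note sgf = sg_facts[OF sg]
  note fi = fos_iff[OF sg assms(2)]
  define V where "V = K \<union> I"
  have fosV: "fos K I adj i \<subseteq> V" unfolding fos_def V_def by auto
  have ufs_iff: "\<And>x. x \<in> ufs K I adj i \<longleftrightarrow> x \<in> V \<and> x \<notin> fos K I adj i \<and> x \<noteq> i"
    unfolding ufs_def V_def by auto
  have i_nfos: "i \<notin> fos K I adj i" using fi assms(2) sgf(3) by auto
  show ?thesis
  proof (rule set_eqI, rule iffI)
    fix F assume "F \<in> F_of K I adj i"
    then have fe: "feasible K I adj F" and nb: "i \<in> nbhd K I adj F" unfolding F_of_def by auto
    obtain xs where dxs: "distinct xs" and sxs: "set xs = F"
      and sim: "\<And>j. j < length xs \<Longrightarrow> simplicial_in adj (V - set (take j xs)) (xs ! j)"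
      using fe unfolding feasible_def V_def by blast
    have iF: "i \<notin> F" using nb unfolding nbhd_def by auto
    have FV: "F \<subseteq> V"
    proof
      fix x assume "x \<in> F"
      then obtain j where "j < length xs" "xs ! j = x" using sxs by (auto simp: in_set_conv_nth)
      then show "x \<in> V" using sim[of j] unfolding simplicial_in_def by auto
    qed
    obtain u where uF: "u \<in> F" and ui: "adj u i" using nb unfolding nbhd_def by auto
    have uK: "u \<in> K" using adjI_K[OF sg assms(2)] ui sgf(4) by blast
    define P where "P j = (j < length xs \<and> xs ! j \<in> K \<and> adj (xs ! j) i)" for j
    obtain ju where "ju < length xs" "xs ! ju = u" using uF sxs by (auto simp: in_set_conv_nth)
    then have "P ju" using uK ui unfolding P_def by auto
    define j0 where "j0 = (LEAST j. P j)"
    have Pj0: "P j0" unfolding j0_def using \<open>P ju\<close> by (rule LeastI)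
    define k0 where "k0 = xs ! j0"
    define W0 where "W0 = V - set (take j0 xs)"
    have j0l: "j0 < length xs" and k0K: "k0 \<in> K" and k0i: "adj k0 i" using Pj0 unfolding P_def k0_def by auto
    have k0F: "k0 \<in> F" using j0l sxs k0_def by auto
    have iW: "\<And>j. i \<in> V - set (take j xs)" using iF sxs assms(2) V_def set_take_subset by fastforce
    have s0: "simplicial_in adj W0 k0" using sim[OF j0l] unfolding W0_def k0_def .
    have iW0: "i \<in> W0" using iW W0_def by auto
    note n01 = simp_K_nec(1)[OF sg s0 k0K assms(2) iW0 k0i]
    note n02 = simp_K_nec(2)[OF sg s0 k0K assms(2) iW0 k0i]
    have A: "\<And>k. k \<in> K \<Longrightarrow> \<not> adj k i \<Longrightarrow> k \<in> set (take j0 xs)"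
    proof (rule ccontr)
      fix k assume "k \<in> K" "\<not> adj k i" "k \<notin> set (take j0 xs)"
      then have "k \<in> K \<inter> W0" "k \<noteq> k0" using k0i unfolding W0_def V_def by auto
      then show False using n02 \<open>\<not> adj k i\<close> by auto
    qed
    have B: "\<And>i' k'. i' \<in> I \<Longrightarrow> adj i' k' \<Longrightarrow> \<not> adj i k' \<Longrightarrow> i' \<in> F"
    proof (rule ccontr)
      fix i' k' assume i'I: "i' \<in> I" and a: "adj i' k'" and na: "\<not> adj i k'" and nF: "i' \<notin> F"
      have k'K: "k' \<in> K" using adjI_K[OF sg i'I a] .
      have nk'i: "\<not> adj k' i" using na sgf(4) by blast
      have k't: "k' \<in> set (take j0 xs)" using A[OF k'K nk'i] .
      then obtain p where pl: "p < length xs" and kp: "xs ! p = k'"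
        using set_take_subset[of j0 xs] by (metis in_set_conv_nth subsetD)
      have pj0: "p < j0" using take_idx[OF dxs _ pl] k't kp by auto
      define Wp where "Wp = V - set (take p xs)"
      have sp: "simplicial_in adj Wp k'" using sim[OF pl] kp Wp_def by simp
      have i'W: "i' \<in> Wp" using nF sxs i'I set_take_subset[of p xs] unfolding Wp_def V_def by auto
      have ak'i': "adj k' i'" using a sgf(4) by blast
      have k0W: "k0 \<in> K \<inter> Wp" using nth_not_take2[OF dxs pj0 j0l] k0K unfolding Wp_def k0_def V_def by auto
      have "k0 \<noteq> k'" using k0i nk'i by auto
      then have "adj k0 i'" using simp_K_nec(2)[OF sg sp k'K i'I i'W ak'i'] k0W by auto
      moreover have "i' \<in> I \<inter> W0" using nF sxs i'I set_take_subset[of j0 xs] unfolding W0_def V_def by auto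
      ultimately have "i' = i" using n01 by auto
      then show False using a na by simp
    qed
    have fosF: "fos K I adj i \<subseteq> F"
    proof
      fix x assume "x \<in> fos K I adj i"
      then show "x \<in> F" using fi A B set_take_subset[of j0 xs] sxs by blast
    qed
    define H where "H = F \<inter> ufs K I adj i"
    have "F = fos K I adj i \<union> H" using fosF FV iF ufs_iff unfolding H_def by blast
    moreover have "is_filter (prec K I adj) (ufs K I adj i) H"
      unfolding is_filter_def
    proof (intro conjI ballI impI)
      show "H \<subseteq> ufs K I adj i" unfolding H_def by auto
      fix a b assume aH: "a \<in> H" and bu: "b \<in> ufs K I adj i" and pr: "prec K I adj a b"
      have aK: "a \<in> K" and bI: "b \<in> I" and ab: "adj a b" using pr unfolding prec_def by auto
      have "a \<notin> fos K I adj i" using aH ufs_iff unfolding H_def by blast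
      then have ai: "adj a i" using fi aK by blast
      have bi: "b \<noteq> i" using bu ufs_iff by auto
      show "b \<in> H"
      proof (rule ccontr)
        assume "b \<notin> H"
        then have bF: "b \<notin> F" using bu H_def by auto
        obtain p where pl: "p < length xs" and kp: "xs ! p = a"
          using aH sxs unfolding H_def by (auto simp: in_set_conv_nth)
        define Wp where "Wp = V - set (take p xs)"
        have sp: "simplicial_in adj Wp a" using sim[OF pl] kp Wp_def by simp
        have "b \<in> I \<inter> Wp" using bF sxs bI set_take_subset[of p xs] unfolding Wp_def V_def by auto
        then show False using simp_K_nec(1)[OF sg sp aK assms(2) _ ai] iW[of p] ab bi Wp_def by auto
      qed
    qed
    moreover have "k0 \<in> H \<inter> K"
    proof -
      have "k0 \<notin> fos K I adj i" using k0K k0i fi sgf(3) by blast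
      moreover have "k0 \<noteq> i" using k0K sgf(3) assms(2) by blast
      ultimately show "k0 \<in> H \<inter> K" using k0F k0K FV ufs_iff unfolding H_def by blast
    qed
    ultimately show "F \<in> {fos K I adj i \<union> H | H. is_filter (prec K I adj) (ufs K I adj i) H \<and> H \<inter> K \<noteq> {}}"
      by blast
  next
    fix F assume "F \<in> {fos K I adj i \<union> H | H. is_filter (prec K I adj) (ufs K I adj i) H \<and> H \<inter> K \<noteq> {}}"
    then obtain H where FH: "F = fos K I adj i \<union> H" and filt: "is_filter (prec K I adj) (ufs K I adj i) H"
      and HK: "H \<inter> K \<noteq> {}" by blast
    have Hu: "H \<subseteq> ufs K I adj i" using filt unfolding is_filter_def by auto
    have FV: "F \<subseteq> V" using FH Hu fosV ufs_iff by blast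
    have finV: "finite V" using sgf(1,2) V_def by auto
    define A where "A = F \<inter> I"
    define B where "B = fos K I adj i \<inter> K"
    define C where "C = H \<inter> K"
    have fins: "finite A" "finite B" "finite C" using sgf(1,2) unfolding A_def B_def C_def by auto
    obtain la where la: "distinct la" "set la = A" using finite_distinct_list[OF fins(1)] by blast
    obtain lb where lb: "distinct lb" "set lb = B" using finite_distinct_list[OF fins(2)] by blast
    obtain lc where lc: "distinct lc" "set lc = C" using finite_distinct_list[OF fins(3)] by blast
    define xs where "xs = la @ lb @ lc"
    have BC: "B \<inter> C = {}" using Hu ufs_iff unfolding B_def C_def by auto
    have AB: "A \<inter> (B \<union> C) = {}" using sgf(3) unfolding A_def B_def C_def by auto
    have dxs: "distinct xs" unfolding xs_def using la lb lc BC AB by auto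
    have sxs: "set xs = F" unfolding xs_def using la lb lc FV FH unfolding A_def B_def C_def V_def by auto
    have iF: "i \<notin> F" using FH i_nfos Hu ufs_iff by auto
    have sim: "\<forall>j < length xs. simplicial_in adj (K \<union> I - set (take j xs)) (xs ! j)"
    proof (intro allI impI)
      fix j assume jl: "j < length xs"
      define W where "W = K \<union> I - set (take j xs)"
      have xW: "xs ! j \<in> W" using nth_not_take[OF dxs jl] jl sxs FV unfolding W_def V_def
        by (metis DiffI nth_mem subsetD)
      have iW: "i \<in> W" using iF sxs assms(2) set_take_subset[of j xs] unfolding W_def by auto
      consider "xs ! j \<in> A" | "xs ! j \<in> B" "A \<subseteq> set (take j xs)"
        | "xs ! j \<in> C" "A \<union> B \<subseteq> set (take j xs)"
        using nth_3[of j la lb lc] jl la lb lc unfolding xs_def by auto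
      then show "simplicial_in adj W (xs ! j)"
      proof cases
        case 1 then show ?thesis using simp_I[OF sg _ xW] A_def by auto
      next
        case 2
        have kK: "xs ! j \<in> K" and nki: "\<not> adj (xs ! j) i" using 2 B_def fi sgf(3) by auto
        show ?thesis
        proof (rule simp_K[OF sg kK xW])
          fix x assume xW': "x \<in> W" and xI: "x \<in> I" and ax: "adj (xs ! j) x"
          have "x \<in> fos K I adj i" using fi xI ax nki sgf(4) by blast
          then have "x \<in> A" using xI FH A_def by auto
          then show "x = i \<and> (\<forall>k'\<in>K \<inter> W. adj k' i)" using 2 xW' W_def by auto
        qed
      next
        case 3
        have kK: "xs ! j \<in> K" and kH: "xs ! j \<in> H" using 3 C_def by auto
        have ki: "adj (xs ! j) i" using kH Hu ufs_iff fi kK by auto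
        show ?thesis
        proof (rule simp_K[OF sg kK xW])
          fix x assume xW': "x \<in> W" and xI: "x \<in> I" and ax: "adj (xs ! j) x"
          have xnA: "x \<notin> F" using xW' xI 3 A_def W_def by auto
          have "x = i"
          proof (rule ccontr)
            assume "x \<noteq> i"
            moreover have "x \<notin> fos K I adj i" using xnA FH by auto
            ultimately have "x \<in> ufs K I adj i" using ufs_iff xI V_def by auto
            moreover have "prec K I adj (xs ! j) x" using kK xI ax unfolding prec_def by auto
            ultimately have "x \<in> H" using filt kH unfolding is_filter_def by blast
            then show False using xnA FH by auto
          qed
          moreover have "\<forall>k'\<in>K \<inter> W. adj k' i"
          proof
            fix k' assume "k' \<in> K \<inter> W"
            then have "k' \<notin> B" using 3 W_def by auto
            then show "adj k' i" using \<open>k' \<in> K \<inter> W\<close> fi B_def by auto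
          qed
          ultimately show "x = i \<and> (\<forall>k'\<in>K \<inter> W. adj k' i)" by auto
        qed
      qed
    qed
    have fe: "feasible K I adj F" unfolding feasible_def using dxs sxs sim by blast
    obtain k where kH: "k \<in> H" "k \<in> K" using HK by auto
    have "adj k i" using kH Hu ufs_iff fi by auto
    then have "i \<in> nbhd K I adj F" unfolding nbhd_def using iF assms(2) FH kH by auto
    then show "F \<in> F_of K I adj i" using fe unfolding F_of_def by auto
  qed
qed

end
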